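(* Let $P$ be a poset on $[n]$ whose labeling is natural (the identity permutation $e$ is a linear extension), and let $x_1,\dots,x_n$ be strictly positive reals. Let $M$ be the transition matrix of the transposition graph of $P$. Define, for $\pi\in\mathcal{L}(P)$, $$w(\pi)=\prod_{i=1}^n x_{\pi_i}^{\,i-\pi_i}.$$ Then $w$ is the stationary state of the transposition graph Markov chain normalized by $w(e)=1$, i.e. $\sum_{\pi\in\mathcal{L}(P)}M(\pi',\pi)\,w(\pi)=0$ for every $\pi'\in\mathcal{L}(P)$.
   Context: Linear extensions: $\mathcal{L}(P)=\{\pi\in S_n : i\prec j \text{ in } P \Rightarrow \pi^{-1}_i<\pi^{-1}_j\}$, written in one-line notation $\pi=\pi_1\cdots\pi_n$. For $1\le j<n$, $\pi\tau_j$ is obtained from $\pi$ by swapping $\pi_j$ and $\pi_{j+1}$ if they are incomparable in $P$, and $\pi\tau_j=\pi$ otherwise. Transposition graph: vertex set $\mathcal{L}(P)$, and for each $\pi$ and $j\in[n-1]$ a directed edge $\pi\to\pi\tau_j$ of weight $x_{\pi_j}$. Transition matrix $M$: for $\pi'\neq\pi$, $M(\pi',\pi)$ is the sum of weights of edges $\pi\to\pi'$; $M(\pi,\pi)$ is minus the sum of weights of edges $\pi\to\pi'$ with $\pi'\ne\pi$. *)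

theory Defs
  imports "HOL-Combinatorics.Combinatorics"
begin

definition poset_on :: "nat \<Rightarrow> (nat \<Rightarrow> nat \<Rightarrow> bool) \<Rightarrow> bool" where
  "poset_on n lt \<longleftrightarrow>
     (\<forall>a b. lt a b \<longrightarrow> a \<in> {1..n} \<and> b \<in> {1..n}) \<and>
     (\<forall>a. \<not> lt a a) \<and>
     (\<forall>a b c. lt a b \<longrightarrow> lt b c \<longrightarrow> lt a c)"

text \<open>Linear extensions, as permutations of {1..n} in one-line notation (pi i = pi_i).\<close>
definition linext :: "nat \<Rightarrow> (nat \<Rightarrow> nat \<Rightarrow> bool) \<Rightarrow> (nat \<Rightarrow> nat) set" where
  "linext n lt = {\<pi>. \<pi> permutes {1..n} \<and>
      (\<forall>i\<in>{1..n}. \<forall>j\<in>{1..n}. lt i j \<longrightarrow> inv \<pi> i < inv \<pi> j)}"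

definition tau :: "(nat \<Rightarrow> nat \<Rightarrow> bool) \<Rightarrow> (nat \<Rightarrow> nat) \<Rightarrow> nat \<Rightarrow> (nat \<Rightarrow> nat)" where
  "tau lt \<pi> j = (if \<not> lt (\<pi> j) (\<pi> (Suc j)) \<and> \<not> lt (\<pi> (Suc j)) (\<pi> j)
                 then \<pi> \<circ> Transposition.transpose j (Suc j) else \<pi>)"

text \<open>Transition matrix M(pi', pi) of the transposition graph; the edge pi -> pi tau_j
  (j in [n-1]) has weight x (pi j).\<close>
definition transM :: "nat \<Rightarrow> (nat \<Rightarrow> nat \<Rightarrow> bool) \<Rightarrow> (nat \<Rightarrow> real) \<Rightarrow>
    (nat \<Rightarrow> nat) \<Rightarrow> (nat \<Rightarrow> nat) \<Rightarrow> real" where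
  "transM n lt x \<pi>' \<pi> =
     (if \<pi>' \<noteq> \<pi> then (\<Sum>j\<in>{j\<in>{1..<n}. tau lt \<pi> j = \<pi>'}. x (\<pi> j))
      else - (\<Sum>j\<in>{j\<in>{1..<n}. tau lt \<pi> j \<noteq> \<pi>}. x (\<pi> j)))"

definition wt :: "nat \<Rightarrow> (nat \<Rightarrow> real) \<Rightarrow> (nat \<Rightarrow> nat) \<Rightarrow> real" where
  "wt n x \<pi> = (\<Prod>i\<in>{1..n}. x (\<pi> i) powi (int i - int (\<pi> i)))"

end

theory Submission
  imports Defs
begin

lemma tau_ne:
  assumes "tau lt \<pi> j \<noteq> \<pi>"
  shows "tau lt \<pi> j = \<pi> \<circ> Transposition.transpose j (Suc j)"
    and "\<not> lt (\<pi> j) (\<pi> (Suc j)) \<and> \<not> lt (\<pi> (Suc j)) (\<pi> j)"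
  using assms unfolding tau_def by (auto split: if_splits)

lemma tau_back:
  assumes "tau lt \<pi> j \<noteq> \<pi>"
  shows "tau lt (tau lt \<pi> j) j = \<pi>"
proof -
  have a: "tau lt \<pi> j = \<pi> \<circ> Transposition.transpose j (Suc j)"
    and b: "\<not> lt (\<pi> j) (\<pi> (Suc j)) \<and> \<not> lt (\<pi> (Suc j)) (\<pi> j)"
    using tau_ne[OF assms] by auto
  show ?thesis using b unfolding a tau_def by (simp add: comp_assoc)
qed

lemma tau_L:
  assumes L: "\<pi> \<in> linext n lt" and j: "1 \<le> j" "j < n" and ne: "tau lt \<pi> j \<noteq> \<pi>"
  shows "tau lt \<pi> j \<in> linext n lt"
proof -
  let ?s = "Transposition.transpose j (Suc j)"
  have a: "tau lt \<pi> j = \<pi> \<circ> ?s"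
    and b: "\<not> lt (\<pi> j) (\<pi> (Suc j)) \<and> \<not> lt (\<pi> (Suc j)) (\<pi> j)"
    using tau_ne[OF ne] by auto
  have p: "\<pi> permutes {1..n}" and o: "\<forall>i\<in>{1..n}. \<forall>k\<in>{1..n}. lt i k \<longrightarrow> inv \<pi> i < inv \<pi> k"
    using L unfolding linext_def by auto
  have sp: "?s permutes {1..n}" using j by (intro permutes_swap_id) auto
  have cp: "\<pi> \<circ> ?s permutes {1..n}" using permutes_compose[OF sp p] .
  have inv: "inv (\<pi> \<circ> ?s) = ?s \<circ> inv \<pi>"
    using o_inv_distrib[OF permutes_bij[OF p] bij_transpose] by simp
  have "inv (\<pi> \<circ> ?s) i < inv (\<pi> \<circ> ?s) k" if i: "i \<in> {1..n}" and k: "k \<in> {1..n}" and l: "lt i k" for i k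
  proof -
    have lt: "inv \<pi> i < inv \<pi> k" using o i k l by auto
    have pi: "\<pi> (inv \<pi> i) = i" "\<pi> (inv \<pi> k) = k" using permutes_inverses(1)[OF p] by auto
    have "\<not> (inv \<pi> i = j \<and> inv \<pi> k = Suc j)" using b pi l by auto
    then show ?thesis unfolding inv using lt by (auto simp: transpose_def)
  qed
  then show ?thesis unfolding linext_def a using cp by auto
qed

lemma wt_swap:
  assumes L: "\<pi> \<in> linext n lt" and j: "1 \<le> j" "j < n"
    and x: "\<And>i. i \<in> {1..n} \<Longrightarrow> x i > 0"
  shows "x (\<pi> (Suc j)) * wt n x (\<pi> \<circ> Transposition.transpose j (Suc j)) = x (\<pi> j) * wt n x \<pi>"
proof -
  let ?s = "Transposition.transpose j (Suc j)"
  have p: "\<pi> permutes {1..n}" using L unfolding linext_def by auto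
  have aI: "\<pi> j \<in> {1..n}" "\<pi> (Suc j) \<in> {1..n}" using j permutes_in_image[OF p] by auto
  define a where "a = \<pi> j"
  define b where "b = \<pi> (Suc j)"
  have xa: "x a \<noteq> 0" "x b \<noteq> 0" using x aI a_def b_def by (metis less_irrefl)+
  define R where "R = (\<Prod>i\<in>{1..n} - {j, Suc j}. x (\<pi> i) powi (int i - int (\<pi> i)))"
  have sub: "{j, Suc j} \<subseteq> {1..n}" using j by auto
  have w1: "wt n x \<pi> = (\<Prod>i\<in>{j, Suc j}. x (\<pi> i) powi (int i - int (\<pi> i))) * R"
    unfolding wt_def R_def by (subst prod.subset_diff[OF sub]) (auto simp: mult.commute)
  have w2: "wt n x (\<pi> \<circ> ?s) = (\<Prod>i\<in>{j, Suc j}. x ((\<pi> \<circ> ?s) i) powi (int i - int ((\<pi> \<circ> ?s) i))) * R"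
    unfolding wt_def R_def
    by (subst prod.subset_diff[OF sub]) (auto simp: mult.commute intro!: prod.cong)
  have e1: "wt n x \<pi> = x a powi (int j - int a) * x b powi (int (Suc j) - int b) * R"
    using w1 by (simp only: a_def b_def) simp
  have e2: "wt n x (\<pi> \<circ> ?s) = x b powi (int j - int b) * x a powi (int (Suc j) - int a) * R"
    using w2 by (simp only: a_def b_def) simp
  have pa: "x a powi (int (Suc j) - int a) = x a powi (int j - int a) * x a"
    using power_int_add_1[of "x a" "int j - int a"] xa by (simp add: algebra_simps of_nat_Suc)
  have pb: "x b powi (int (Suc j) - int b) = x b powi (int j - int b) * x b"
    using power_int_add_1[of "x b" "int j - int b"] xa by (simp add: algebra_simps of_nat_Suc)
  show ?thesis unfolding a_def[symmetric] b_def[symmetric] e1 e2 pa pb by (simp add: algebra_simps)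
qed

theorem theorem4p7:
  fixes n :: nat and lt :: "nat \<Rightarrow> nat \<Rightarrow> bool" and x :: "nat \<Rightarrow> real"
  assumes "poset_on n lt"
    and "id \<in> linext n lt"
    and "\<And>i. i \<in> {1..n} \<Longrightarrow> x i > 0"
  shows "wt n x id = 1 \<and>
    (\<forall>\<pi>'\<in>linext n lt. (\<Sum>\<pi>\<in>linext n lt. transM n lt x \<pi>' \<pi> * wt n x \<pi>) = 0)"
proof
  show "wt n x id = 1" unfolding wt_def by simp
next
  let ?L = "linext n lt"
  have fin: "finite ?L"
    by (rule finite_subset[OF _ finite_permutations[of "{1..n}"]]) (auto simp: linext_def)
  show "\<forall>\<pi>'\<in>?L. (\<Sum>\<pi>\<in>?L. transM n lt x \<pi>' \<pi> * wt n x \<pi>) = 0"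
  proof
    fix \<pi>' assume p': "\<pi>' \<in> ?L"
    let ?J = "{1..<n}"
    have inner: "(\<Sum>\<pi>\<in>?L - {\<pi>'}. (if tau lt \<pi> j = \<pi>' then x (\<pi> j) * wt n x \<pi> else 0))
        = (if tau lt \<pi>' j \<noteq> \<pi>' then x (\<pi>' j) * wt n x \<pi>' else 0)" if j: "j \<in> ?J" for j
    proof (cases "tau lt \<pi>' j \<noteq> \<pi>'")
      case True
      define \<rho> where "\<rho> = tau lt \<pi>' j"
      have rL: "\<rho> \<in> ?L - {\<pi>'}" using tau_L[OF p' _ _ True] j True \<rho>_def by auto
      have "(\<Sum>\<pi>\<in>?L - {\<pi>'}. (if tau lt \<pi> j = \<pi>' then x (\<pi> j) * wt n x \<pi> else 0))
          = (\<Sum>\<pi>\<in>?L - {\<pi>'}. (if \<pi> = \<rho> then x (\<pi> j) * wt n x \<pi> else 0))"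
      proof (rule sum.cong[OF refl])
        fix \<pi> assume \<pi>: "\<pi> \<in> ?L - {\<pi>'}"
        have "tau lt \<pi> j = \<pi>' \<longleftrightarrow> \<pi> = \<rho>"
        proof
          assume h: "tau lt \<pi> j = \<pi>'"
          then have "tau lt \<pi> j \<noteq> \<pi>" using \<pi> by auto
          then show "\<pi> = \<rho>" using tau_back[of lt \<pi> j] h \<rho>_def by simp
        next
          assume "\<pi> = \<rho>" then show "tau lt \<pi> j = \<pi>'" using tau_back[OF True] \<rho>_def by simp
        qed
        then show "(if tau lt \<pi> j = \<pi>' then x (\<pi> j) * wt n x \<pi> else 0)
          = (if \<pi> = \<rho> then x (\<pi> j) * wt n x \<pi> else 0)" by simp
      qed
      also have "\<dots> = x (\<rho> j) * wt n x \<rho>" using fin rL by (simp add: sum.delta')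
      also have "\<dots> = x (\<pi>' j) * wt n x \<pi>'"
        using wt_swap[OF p' _ _ assms(3), of j] j tau_ne[OF True] \<rho>_def by auto
      finally show ?thesis using True by simp
    next
      case False
      have "(if tau lt \<pi> j = \<pi>' then x (\<pi> j) * wt n x \<pi> else 0) = 0" if "\<pi> \<in> ?L - {\<pi>'}" for \<pi>
      proof -
        have "tau lt \<pi> j \<noteq> \<pi>'"
        proof
          assume h: "tau lt \<pi> j = \<pi>'"
          then have "tau lt \<pi> j \<noteq> \<pi>" using that by auto
          then have "tau lt \<pi>' j = \<pi>" using tau_back[of lt \<pi> j] h by simp
          then show False using False that by auto
        qed
        then show ?thesis by simp
      qed
      then show ?thesis using False by simp
    qed
    have off: "transM n lt x \<pi>' \<pi> * wt n x \<pi> = (\<Sum>j\<in>?J. (if tau lt \<pi> j = \<pi>' then x (\<pi> j) * wt n x \<pi> else 0))"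
      if "\<pi> \<noteq> \<pi>'" for \<pi>
      using that unfolding transM_def
      by (simp add: sum.inter_filter[symmetric] sum_distrib_right eq_commute[of \<pi>'])
    have "(\<Sum>\<pi>\<in>?L. transM n lt x \<pi>' \<pi> * wt n x \<pi>)
        = transM n lt x \<pi>' \<pi>' * wt n x \<pi>' + (\<Sum>\<pi>\<in>?L - {\<pi>'}. transM n lt x \<pi>' \<pi> * wt n x \<pi>)"
      using fin p' by (simp add: sum.remove)
    also have "(\<Sum>\<pi>\<in>?L - {\<pi>'}. transM n lt x \<pi>' \<pi> * wt n x \<pi>)
        = (\<Sum>\<pi>\<in>?L - {\<pi>'}. \<Sum>j\<in>?J. (if tau lt \<pi> j = \<pi>' then x (\<pi> j) * wt n x \<pi> else 0))"
      using off by (intro sum.cong) auto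
    also have "\<dots> = (\<Sum>j\<in>?J. \<Sum>\<pi>\<in>?L - {\<pi>'}. (if tau lt \<pi> j = \<pi>' then x (\<pi> j) * wt n x \<pi> else 0))"
      by (rule sum.swap)
    also have "\<dots> = (\<Sum>j\<in>?J. (if tau lt \<pi>' j \<noteq> \<pi>' then x (\<pi>' j) * wt n x \<pi>' else 0))"
      using inner by (intro sum.cong) auto
    also have "\<dots> = (\<Sum>j\<in>{j\<in>?J. tau lt \<pi>' j \<noteq> \<pi>'}. x (\<pi>' j)) * wt n x \<pi>'"
      by (simp add: sum.inter_filter[symmetric] sum_distrib_right)
    finally show "(\<Sum>\<pi>\<in>?L. transM n lt x \<pi>' \<pi> * wt n x \<pi>) = 0"
      unfolding transM_def by simp
  qed
qed

end
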